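(* For any positive integer $\nu$, there exists a sequence of length $\nu^2+1$ consisting of $\nu$ symbols and having the isolated equality property.
   Context: A finite or infinite sequence $(x_0,x_1,x_2,\ldots)$ is said to have the isolated equality property if for all distinct positions $i\neq j$, whenever $x_i=x_j$ we have $x_{i+1}\neq x_{j+1}$ and $x_{i-1}\neq x_{j-1}$ (for those indices that exist in the sequence); that is, equality at any pair of locations implies inequality at the pair of their immediate successors and at the pair of their immediate predecessors. (This property is satisfied by state sequences of counter-assisted generators $x_i=f(x_{i-1})+i \pmod n$, for positions $i\neq j \pmod n$.) *)

theory Defs
  imports Main
begin

definition isolated_equality :: "'a list \<Rightarrow> bool" where
  "isolated_equality xs \<longleftrightarrow>
     (\<forall>i j. i < length xs \<and> j < length xs \<and> i \<noteq> j \<and> xs ! i = xs ! j \<longrightarrow>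
        (Suc i < length xs \<and> Suc j < length xs \<longrightarrow> xs ! Suc i \<noteq> xs ! Suc j) \<and>
        (0 < i \<and> 0 < j \<longrightarrow> xs ! (i - 1) \<noteq> xs ! (j - 1)))"

end

theory Submission
  imports Defs
begin

definition adj :: "nat list \<Rightarrow> (nat \<times> nat) list" where
  "adj xs = zip xs (tl xs)"

definition blk :: "nat \<Rightarrow> nat list" where
  "blk n = n # concat (map (\<lambda>a. [n, a]) ([1..<n] @ [0]))"

fun LL :: "nat \<Rightarrow> nat list" where
  "LL 0 = [0]"
| "LL (Suc n) = LL n @ (if n = 0 then [0] else blk n)"

lemma adj_append: "xs \<noteq> [] \<Longrightarrow> adj (xs @ ys) = adj xs @ adj (last xs # ys)"
  unfolding adj_def by (induction xs rule: induct_list012) auto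

lemma S1: "a \<in> set as \<Longrightarrow> (n, a) \<in> set (adj (p # concat (map (\<lambda>a. [n, a]) as)))"
proof (induction as arbitrary: p)
  case Nil then show ?case by simp
next
  case (Cons b as)
  then show ?case by (auto simp: adj_def)
qed

lemma S2: "q \<in> set (p # as) \<Longrightarrow> (q, n) \<in> set (adj (p # concat (map (\<lambda>a. [n, a]) (as @ [b]))))"
proof (induction as arbitrary: p)
  case Nil then show ?case by (simp add: adj_def)
next
  case (Cons c as)
  show ?case
  proof (cases "q = p")
    case True then show ?thesis by (simp add: adj_def)
  next
    case False
    then have "q \<in> set (c # as)" using Cons.prems by simp
    from Cons.IH[OF this] show ?thesis by (simp add: adj_def)
  qed
qed

lemma last_LL: "last (LL n) = 0"
  by (cases n) (auto simp: blk_def)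

lemma LL_ne: "LL n \<noteq> []"
  by (induction n) auto

lemma len_blk: assumes "n \<ge> 1" shows "length (blk n) = 2 * n + 1"
proof -
  have "length (concat (map (\<lambda>a. [n, a]) xs)) = 2 * length xs" for xs :: "nat list"
    by (induction xs) auto
  then show ?thesis using assms unfolding blk_def by (cases n) auto
qed

lemma len_LL: "length (LL n) = n^2 + 1"
  by (induction n) (auto simp: len_blk power2_eq_square)

lemma set_blk: "set (blk n) \<subseteq> {..n}"
  unfolding blk_def by auto

lemma set_LL: "n \<ge> 1 \<Longrightarrow> set (LL n) \<subseteq> {..<n}"
proof (induction n)
  case 0 then show ?case by simp
next
  case (Suc n)
  show ?case
  proof (cases "n = 0")
    case True then show ?thesis by simp
  next
    case False
    then have "set (LL n) \<subseteq> {..<n}" using Suc by simp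
    then show ?thesis using set_blk[of n] False by auto
  qed
qed

lemma blk_cover:
  assumes "n \<ge> 1" "a \<le> n" "b \<le> n" "a = n \<or> b = n"
  shows "(a, b) \<in> set (adj (0 # blk n))"
proof -
  have e: "adj (0 # blk n) = (0, n) # adj (n # concat (map (\<lambda>a. [n, a]) ([1..<n] @ [0])))"
    unfolding blk_def adj_def by simp
  show ?thesis
  proof (cases "a = n")
    case True
    show ?thesis
    proof (cases "b = n")
      case True
      have "(n, n) \<in> set (adj (n # concat (map (\<lambda>a. [n, a]) ([1..<n] @ [0]))))"
        by (rule S2) simp
      then show ?thesis using \<open>a = n\<close> True e by simp
    next
      case False
      then have "b \<in> set ([1..<n] @ [0])" using assms by auto
      from S1[OF this, of n n] show ?thesis using True e by simp
    qed
  next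
    case False
    then have bn: "b = n" using assms by auto
    show ?thesis
    proof (cases "a = 0")
      case True then show ?thesis using e bn by simp
    next
      case False
      then have "a \<in> set (n # [1..<n])" using assms \<open>a \<noteq> n\<close> by auto
      from S2[OF this, of n 0] show ?thesis using e bn by simp
    qed
  qed
qed

lemma cover_LL: "{..<n} \<times> {..<n} \<subseteq> set (adj (LL n))"
proof (induction n)
  case 0 then show ?case by simp
next
  case (Suc n)
  show ?case
  proof (cases "n = 0")
    case True then show ?thesis by (auto simp add: adj_def)
  next
    case False
    have eq: "adj (LL (Suc n)) = adj (LL n) @ adj (0 # blk n)"
      using False adj_append[OF LL_ne[of n]] last_LL[of n] by simp
    show ?thesis
    proof
      fix x assume x: "x \<in> {..<Suc n} \<times> {..<Suc n}"
      obtain a b where ab: "x = (a, b)" by force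
      show "x \<in> set (adj (LL (Suc n)))"
      proof (cases "a = n \<or> b = n")
        case True
        then have "(a, b) \<in> set (adj (0 # blk n))"
          using blk_cover[of n a b] x ab False by auto
        then show ?thesis using eq ab by simp
      next
        case F: False
        then have "(a, b) \<in> set (adj (LL n))" using Suc.IH x ab by auto
        then show ?thesis using eq ab by simp
      qed
    qed
  qed
qed

lemma distinct_adj_LL: "distinct (adj (LL n))"
proof -
  have l: "length (adj (LL n)) = n * n"
    unfolding adj_def using len_LL[of n] by (simp add: power2_eq_square)
  have "card ({..<n} \<times> {..<n}) \<le> card (set (adj (LL n)))"
    by (rule card_mono[OF _ cover_LL]) simp
  then have "n * n \<le> card (set (adj (LL n)))" by (simp add: card_cartesian_product)
  moreover have "card (set (adj (LL n))) \<le> length (adj (LL n))" by (rule card_length)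
  ultimately have "card (set (adj (LL n))) = length (adj (LL n))" using l by simp
  then show ?thesis by (simp add: card_distinct)
qed

lemma iso_of_distinct:
  assumes d: "distinct (zip xs (tl xs))"
  shows "isolated_equality xs"
  unfolding isolated_equality_def
proof (intro allI impI conjI)
  fix i j
  assume h: "i < length xs \<and> j < length xs \<and> i \<noteq> j \<and> xs ! i = xs ! j"
  have key: "\<And>k l. Suc k < length xs \<Longrightarrow> Suc l < length xs \<Longrightarrow> k \<noteq> l \<Longrightarrow>
     (xs ! k, xs ! Suc k) \<noteq> (xs ! l, xs ! Suc l)"
  proof -
    fix k l assume "Suc k < length xs" "Suc l < length xs" "k \<noteq> l"
    then have "zip xs (tl xs) ! k \<noteq> zip xs (tl xs) ! l"
      using d nth_eq_iff_index_eq[OF d, of k l] by simp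
    then show "(xs ! k, xs ! Suc k) \<noteq> (xs ! l, xs ! Suc l)"
      using \<open>Suc k < length xs\<close> \<open>Suc l < length xs\<close> by (simp add: nth_tl)
  qed
  {
    assume "Suc i < length xs \<and> Suc j < length xs"
    then show "xs ! Suc i \<noteq> xs ! Suc j" using key[of i j] h by auto
  }
  {
    assume p: "0 < i \<and> 0 < j"
    then show "xs ! (i - 1) \<noteq> xs ! (j - 1)" using key[of "i - 1" "j - 1"] h by (cases i; cases j) auto
  }
qed

theorem mainTheorem5:
  fixes \<nu> :: nat
  assumes "\<nu> \<ge> 1"
  shows "\<exists>xs :: nat list. length xs = \<nu>^2 + 1 \<and> set xs \<subseteq> {..<\<nu>} \<and> isolated_equality xs"
  using len_LL[of \<nu>] set_LL[OF assms] iso_of_distinct[OF distinct_adj_LL[of \<nu>, unfolded adj_def]]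
  by blast

end
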